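(* Fix a substate $j\in\{1,\dots,N\}$, a time $k$, a node $i\in\mathcal{V}\setminus\{j\}$ and $m\in\mathbb{N}_+$, and suppose $\tau^{(j)}_i[k]=m$. Then, under the rules of the freshness-index algorithm (for any choice of the gains $\mathbf{L}_1,\dots,\mathbf{L}_N$ and any initial estimates), there exist nodes $v(\tau)\in\mathcal{V}\setminus\{j\}$, $\tau=k-m,\dots,k-1$, such that $$\hat{\mathbf{z}}^{(j)}_i[k]=\mathbf{A}_{jj}^{m}\,\hat{\mathbf{z}}^{(j)}_j[k-m]+\sum_{q=1}^{j-1}\sum_{\tau=k-m}^{k-1}\mathbf{A}_{jj}^{\,k-\tau-1}\mathbf{A}_{jq}\,\hat{\mathbf{z}}^{(q)}_{v(\tau)}[\tau].$$
   Context: Graphs. Nodes $\mathcal{V}=\{1,\dots,N\}$. At each time $k\in\mathbb{N}=\{0,1,2,\dots\}$ there is a directed graph $\mathcal{G}[k]=(\mathcal{V},\mathcal{E}[k])$; $(i,j)\in\mathcal{E}[k]$ means node $i$ can send information to node $j$ at time $k$. $\mathcal{N}_i[k]=\{l\neq i:(l,i)\in\mathcal{E}[k]\}$ is the set of neighbors of $i$ at time $k$. System. $\mathbf{x}[k+1]=\mathbf{A}\mathbf{x}[k]$, $\mathbf{y}_i[k]=\mathbf{C}_i\mathbf{x}[k]$, $\mathbf{A}\in\mathbb{R}^{n\times n}$. An invertible $\mathbf{T}$ is fixed such that with $\mathbf{x}[k]=\mathbf{T}\mathbf{z}[k]$ one has $\mathbf{z}[k+1]=\bar{\mathbf{A}}\mathbf{z}[k]$,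 where $\mathbf{z}=[\mathbf{z}^{(1)T}\cdots\mathbf{z}^{(N)T}]^T$ with $\mathbf{z}^{(j)}\in\mathbb{R}^{n_j}$ ("substate $j$"), $\bar{\mathbf{A}}=\mathbf{T}^{-1}\mathbf{A}\mathbf{T}$ is block lower triangular with blocks $\mathbf{A}_{jq}$ ($\mathbf{A}_{jq}=0$ for $q>j$); and $\mathbf{C}_i\mathbf{T}=[\mathbf{C}_{i1}\ \cdots\ \mathbf{C}_{ii}\ 0\ \cdots\ 0]$. Node $j$ is called the source node of substate $j$. Freshness indices. For each substate $j$ and node $i$, node $i$ keeps $\tau^{(j)}_i[k]\in\{\omega\}\cup\mathbb{N}$, where $\omega$ is a special symbol. Initialization: $\tau^{(j)}_j[0]=0$, $\tau^{(j)}_i[0]=\omega$ for $i\neq j$. The source keeps $\tau^{(j)}_j[k]=0$ for all $k$. For $i\neq j$, let $\mathcal{M}^{(j)}_i[k]=\{l\in\mathcal{N}_i[k]:\tau^{(j)}_l[k]\neq\omega\}$. Case 1, $\tau^{(j)}_i[k]=\omega$: if $\mathcal{M}^{(j)}_i[k]\neq\emptyset$, let $u$ be any minimizer of $\tau^{(j)}_l[k]$ over $l\in\mathcal{M}^{(j)}_i[k]$, set $\tau^{(j)}_i[k+1]=\tau^{(j)}_u[k]+1$ and perform an "adopt-$u$" estimate update; otherwise set $\tau^{(j)}_i[k+1]=\omega$ and perform an "open-loop" estimate update. Case 2, $\tau^{(j)}_i[k]\neq\omega$: let $\mathcal{F}^{(j)}_i[k]=\{l\in\mathcal{M}^{(j)}_i[k]:\tau^{(j)}_l[k]<\tau^{(j)}_i[k]\}$;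 if nonempty, let $u$ be any minimizer of $\tau^{(j)}_l[k]$ over $\mathcal{F}^{(j)}_i[k]$, set $\tau^{(j)}_i[k+1]=\tau^{(j)}_u[k]+1$ and perform an adopt-$u$ update; otherwise set $\tau^{(j)}_i[k+1]=\tau^{(j)}_i[k]+1$ and perform an open-loop update. Estimates. Each node $i$ keeps $\hat{\mathbf{z}}_i[k]=[\hat{\mathbf{z}}^{(1)T}_i[k]\cdots\hat{\mathbf{z}}^{(N)T}_i[k]]^T$, with arbitrary initial value. Source update for substate $j$: $\hat{\mathbf{z}}^{(j)}_j[k+1]=(\mathbf{A}_{jj}-\mathbf{L}_j\mathbf{C}_{jj})\hat{\mathbf{z}}^{(j)}_j[k]+\sum_{q=1}^{j-1}(\mathbf{A}_{jq}-\mathbf{L}_j\mathbf{C}_{jq})\hat{\mathbf{z}}^{(q)}_j[k]+\mathbf{L}_j\mathbf{y}_j[k]$. Adopt-$u$ update at node $i\ne j$: $\hat{\mathbf{z}}^{(j)}_i[k+1]=\mathbf{A}_{jj}\hat{\mathbf{z}}^{(j)}_u[k]+\sum_{q=1}^{j-1}\mathbf{A}_{jq}\hat{\mathbf{z}}^{(q)}_i[k]$. Open-loop update at node $i\neq j$: $\hat{\mathbf{z}}^{(j)}_i[k+1]=\mathbf{A}_{jj}\hat{\mathbf{z}}^{(j)}_i[k]+\sum_{q=1}^{j-1}\mathbf{A}_{jq}\hat{\mathbf{z}}^{(q)}_i[k]$. These updates are carried out for every substate $j$ at every time $k$. *)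

theory Defs
  imports "Jordan_Normal_Form.Matrix"
begin

definition vsum :: "nat \<Rightarrow> ('b \<Rightarrow> real vec) \<Rightarrow> 'b set \<Rightarrow> real vec" where
  "vsum d f S = vec d (\<lambda>r. \<Sum>s\<in>S. f s $ r)"

definition nbrs :: "(nat \<Rightarrow> (nat \<times> nat) set) \<Rightarrow> nat \<Rightarrow> nat \<Rightarrow> nat set" where
  "nbrs E i k = {l. l \<noteq> i \<and> (l, i) \<in> E k}"

text \<open>Plant in the transformed coordinates z = T^-1 x: substates z j k (j = 1..N),
  block lower triangular dynamics and outputs y_i = sum_{q<=i} C_iq z^(q).\<close>
definition plant ::
  "nat \<Rightarrow> (nat \<Rightarrow> nat) \<Rightarrow> (nat \<Rightarrow> nat) \<Rightarrow> (nat \<Rightarrow> nat \<Rightarrow> real mat) \<Rightarrow>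
   (nat \<Rightarrow> nat \<Rightarrow> real mat) \<Rightarrow> (nat \<Rightarrow> nat \<Rightarrow> real vec) \<Rightarrow>
   (nat \<Rightarrow> nat \<Rightarrow> real vec) \<Rightarrow> bool" where
  "plant N n p Ab C z y \<longleftrightarrow>
     (\<forall>j\<in>{1..N}. \<forall>q\<in>{1..N}. Ab j q \<in> carrier_mat (n j) (n q)
                            \<and> C j q \<in> carrier_mat (p j) (n q)) \<and>
     (\<forall>j\<in>{1..N}. z j 0 \<in> carrier_vec (n j)) \<and>
     (\<forall>j\<in>{1..N}. \<forall>k. z j (Suc k) = vsum (n j) (\<lambda>q. Ab j q *\<^sub>v z q k) {1..j}) \<and>
     (\<forall>i\<in>{1..N}. \<forall>k. y i k = vsum (p i) (\<lambda>q. C i q *\<^sub>v z q k) {1..i})"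

text \<open>Adopt-u and open-loop updates of substate j at node i
  (estimates: zh i j k = estimate of substate j held by node i at time k).\<close>
definition adopt_upd ::
  "(nat \<Rightarrow> nat) \<Rightarrow> (nat \<Rightarrow> nat \<Rightarrow> real mat) \<Rightarrow> (nat \<Rightarrow> nat \<Rightarrow> nat \<Rightarrow> real vec) \<Rightarrow>
   nat \<Rightarrow> nat \<Rightarrow> nat \<Rightarrow> nat \<Rightarrow> real vec" where
  "adopt_upd n Ab zh j i u k =
     Ab j j *\<^sub>v zh u j k + vsum (n j) (\<lambda>q. Ab j q *\<^sub>v zh i q k) {1..<j}"

definition openloop_upd ::
  "(nat \<Rightarrow> nat) \<Rightarrow> (nat \<Rightarrow> nat \<Rightarrow> real mat) \<Rightarrow> (nat \<Rightarrow> nat \<Rightarrow> nat \<Rightarrow> real vec) \<Rightarrow>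
   nat \<Rightarrow> nat \<Rightarrow> nat \<Rightarrow> real vec" where
  "openloop_upd n Ab zh j i k =
     Ab j j *\<^sub>v zh i j k + vsum (n j) (\<lambda>q. Ab j q *\<^sub>v zh i q k) {1..<j}"

text \<open>One step of the freshness-index algorithm for substate j at node i /= j, time k.
  The index omega is represented by None.  The minimiser u may be any minimiser.\<close>
definition fresh_step ::
  "(nat \<Rightarrow> (nat \<times> nat) set) \<Rightarrow> (nat \<Rightarrow> nat) \<Rightarrow> (nat \<Rightarrow> nat \<Rightarrow> real mat) \<Rightarrow>
   (nat \<Rightarrow> nat \<Rightarrow> nat \<Rightarrow> nat option) \<Rightarrow> (nat \<Rightarrow> nat \<Rightarrow> nat \<Rightarrow> real vec) \<Rightarrow>
   nat \<Rightarrow> nat \<Rightarrow> nat \<Rightarrow> bool" where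
  "fresh_step E n Ab tau zh j i k \<longleftrightarrow>
     (let M = {l \<in> nbrs E i k. tau j l k \<noteq> None} in
      case tau j i k of
        None \<Rightarrow>
          (if M \<noteq> {} then
             (\<exists>u\<in>M. (\<forall>l\<in>M. the (tau j u k) \<le> the (tau j l k)) \<and>
                     tau j i (Suc k) = Some (the (tau j u k) + 1) \<and>
                     zh i j (Suc k) = adopt_upd n Ab zh j i u k)
           else
             tau j i (Suc k) = None \<and> zh i j (Suc k) = openloop_upd n Ab zh j i k)
      | Some t \<Rightarrow>
          (let F = {l \<in> M. the (tau j l k) < t} in
           if F \<noteq> {} then
             (\<exists>u\<in>F. (\<forall>l\<in>F. the (tau j u k) \<le> the (tau j l k)) \<and>
                     tau j i (Suc k) = Some (the (tau j u k) + 1) \<and>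
                     zh i j (Suc k) = adopt_upd n Ab zh j i u k)
           else
             tau j i (Suc k) = Some (t + 1) \<and> zh i j (Suc k) = openloop_upd n Ab zh j i k))"

definition fresh_run ::
  "nat \<Rightarrow> (nat \<Rightarrow> (nat \<times> nat) set) \<Rightarrow> (nat \<Rightarrow> nat) \<Rightarrow> (nat \<Rightarrow> nat \<Rightarrow> real mat) \<Rightarrow>
   (nat \<Rightarrow> nat \<Rightarrow> real mat) \<Rightarrow> (nat \<Rightarrow> real mat) \<Rightarrow> (nat \<Rightarrow> nat \<Rightarrow> real vec) \<Rightarrow>
   (nat \<Rightarrow> nat \<Rightarrow> nat \<Rightarrow> nat option) \<Rightarrow> (nat \<Rightarrow> nat \<Rightarrow> nat \<Rightarrow> real vec) \<Rightarrow> bool" where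
  "fresh_run N E n Ab C L y tau zh \<longleftrightarrow>
     (\<forall>i\<in>{1..N}. \<forall>j\<in>{1..N}. zh i j 0 \<in> carrier_vec (n j)) \<and>
     (\<forall>j\<in>{1..N}. \<forall>i\<in>{1..N}. tau j i 0 = (if i = j then Some 0 else None)) \<and>
     (\<forall>j\<in>{1..N}. \<forall>k. tau j j k = Some 0) \<and>
     (\<forall>j\<in>{1..N}. \<forall>k. zh j j (Suc k) =
         (Ab j j - L j * C j j) *\<^sub>v zh j j k
         + vsum (n j) (\<lambda>q. (Ab j q - L j * C j q) *\<^sub>v zh j q k) {1..<j}
         + L j *\<^sub>v y j k) \<and>
     (\<forall>j\<in>{1..N}. \<forall>i\<in>{1..N}. i \<noteq> j \<longrightarrow> (\<forall>k. fresh_step E n Ab tau zh j i k))"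

end

theory Submission
  imports Defs
begin

lemma vsum_dim[simp]: "dim_vec (vsum d f S) = d"
  by (simp add: vsum_def)

lemma vsum_carrier[simp]: "vsum d f S \<in> carrier_vec d"
  by (rule carrier_vecI) simp

lemma vsum_index[simp]: "r < d \<Longrightarrow> vsum d f S $ r = (\<Sum>s\<in>S. f s $ r)"
  by (simp add: vsum_def)

lemma vsum_cong:
  assumes "\<And>s. s \<in> S \<Longrightarrow> f s = g s" shows "vsum d f S = vsum d g S"
proof -
  have "(\<lambda>r. \<Sum>s\<in>S. f s $ r) = (\<lambda>r. \<Sum>s\<in>S. g s $ r)"
    using assms by (intro ext sum.cong) auto
  thus ?thesis unfolding vsum_def by simp
qed

lemma vsum_empty: "vsum d f {} = 0\<^sub>v d"
  by (simp add: vsum_def zero_vec_def)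

lemma vsum_zero: "vsum d (\<lambda>s. 0\<^sub>v d) S = 0\<^sub>v d"
  unfolding vsum_def zero_vec_def by (rule eq_vecI) simp_all

lemma mult_vsum:
  assumes "\<And>s. s \<in> S \<Longrightarrow> dim_vec (f s) = d" "dim_col A = d"
  shows "A *\<^sub>v vsum d f S = vsum (dim_row A) (\<lambda>s. A *\<^sub>v f s) S"
proof (intro eq_vecI)
  fix r assume r: "r < dim_vec (vsum (dim_row A) (\<lambda>s. A *\<^sub>v f s) S)"
  hence r': "r < dim_row A" by simp
  have "(A *\<^sub>v vsum d f S) $ r = (\<Sum>c<d. A $$ (r, c) * (\<Sum>s\<in>S. f s $ c))"
    using r' assms(2) by (simp add: scalar_prod_def row_def lessThan_atLeast0)
  also have "\<dots> = (\<Sum>s\<in>S. \<Sum>c<d. A $$ (r, c) * f s $ c)"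
    unfolding sum_distrib_left by (rule sum.swap)
  also have "\<dots> = vsum (dim_row A) (\<lambda>s. A *\<^sub>v f s) S $ r"
    using r' assms by (auto simp add: scalar_prod_def row_def lessThan_atLeast0 intro!: sum.cong)
  finally show "(A *\<^sub>v vsum d f S) $ r = vsum (dim_row A) (\<lambda>s. A *\<^sub>v f s) S $ r" .
qed simp

lemma vsum_add:
  assumes "\<And>s. s \<in> S \<Longrightarrow> dim_vec (g s) = d"
  shows "vsum d f S + vsum d g S = vsum d (\<lambda>s. f s + g s) S"
  using assms by (intro eq_vecI) (auto simp: sum.distrib)

lemma vsum_insert:
  assumes "finite S" "x \<notin> S" "dim_vec (f x) = d"
  shows "vsum d f (insert x S) = vsum d f S + f x"
  using assms by (intro eq_vecI) (auto simp: add.commute)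

lemma pow_left:
  assumes "A \<in> carrier_mat d d"
  shows "A * A ^\<^sub>m p = A ^\<^sub>m (Suc p)"
  using assms
proof (induction p)
  case 0 then show ?case by simp
next
  case (Suc p)
  have "A * A ^\<^sub>m Suc p = (A * A ^\<^sub>m p) * A"
    using Suc.prems by (simp add: assoc_mult_mat[of _ d d _ d _ d])
  also have "\<dots> = A ^\<^sub>m Suc (Suc p)" using Suc by simp
  finally show ?case .
qed

lemma fs_upd:
  assumes "fresh_step E n Ab tau zh j i k"
  shows "\<exists>u. zh i j (Suc k) = adopt_upd n Ab zh j i u k"
proof (cases "tau j i k")
  case None
  show ?thesis
  proof (cases "{l \<in> nbrs E i k. tau j l k \<noteq> None} = {}")
    case True
    then have "zh i j (Suc k) = openloop_upd n Ab zh j i k"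
      using assms None unfolding fresh_step_def Let_def by simp
    then show ?thesis unfolding openloop_upd_def adopt_upd_def by blast
  next
    case False
    then show ?thesis using assms None unfolding fresh_step_def Let_def by auto
  qed
next
  case (Some t)
  show ?thesis
  proof (cases "{l \<in> {l \<in> nbrs E i k. tau j l k \<noteq> None}. the (tau j l k) < t} = {}")
    case True
    then have "zh i j (Suc k) = openloop_upd n Ab zh j i k"
      using assms Some unfolding fresh_step_def Let_def by simp
    then show ?thesis unfolding openloop_upd_def adopt_upd_def by blast
  next
    case False
    then show ?thesis using assms Some unfolding fresh_step_def Let_def by auto
  qed
qed

lemma zh_dims:
  assumes run: "fresh_run N E n Ab C L y tau zh"
    and gains: "\<forall>j\<in>{1..N}. L j \<in> carrier_mat (n j) (p j)"
    and a: "a \<in> {1..N}" and b: "b \<in> {1..N}"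
  shows "zh a b t \<in> carrier_vec (n b)"
proof (cases t)
  case 0
  have "\<forall>i\<in>{1..N}. \<forall>j\<in>{1..N}. zh i j 0 \<in> carrier_vec (n j)"
    using run unfolding fresh_run_def by (elim conjE) assumption
  then show ?thesis using a b 0 by blast
next
  case (Suc t')
  show ?thesis
  proof (cases "a = b")
    case True
    have L: "L b \<in> carrier_mat (n b) (p b)" using gains b by blast
    have "\<forall>j\<in>{1..N}. \<forall>k. zh j j (Suc k) =
         (Ab j j - L j * C j j) *\<^sub>v zh j j k
         + vsum (n j) (\<lambda>q. (Ab j q - L j * C j q) *\<^sub>v zh j q k) {1..<j}
         + L j *\<^sub>v y j k"
      using run unfolding fresh_run_def by (elim conjE) assumption
    then have e: "zh b b (Suc t') = (Ab b b - L b * C b b) *\<^sub>v zh b b t'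
         + vsum (n b) (\<lambda>q. (Ab b q - L b * C b q) *\<^sub>v zh b q t') {1..<b}
         + L b *\<^sub>v y b t'" using b by blast
    have "dim_row (L b) = n b" using L by (rule carrier_matD)
    then have "dim_vec (zh b b (Suc t')) = n b" unfolding e by (simp only: index_add_vec(2) dim_mult_mat_vec)
    then show ?thesis using True Suc by (simp only: carrier_vecI)
  next
    case False
    have "\<forall>j\<in>{1..N}. \<forall>i\<in>{1..N}. i \<noteq> j \<longrightarrow> (\<forall>k. fresh_step E n Ab tau zh j i k)"
      using run unfolding fresh_run_def by (elim conjE) assumption
    then have "fresh_step E n Ab tau zh b a t'" using a b False by blast
    from fs_upd[OF this] obtain u where u: "zh a b (Suc t') = adopt_upd n Ab zh b a u t'" by blast
    have "dim_vec (zh a b (Suc t')) = n b" unfolding u adopt_upd_def by (simp only: index_add_vec(2) vsum_dim)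
    then show ?thesis using Suc by (simp only: carrier_vecI)
  qed
qed

lemma pred_step:
  assumes graph: "\<forall>k. E k \<subseteq> {1..N} \<times> {1..N}"
    and run: "fresh_run N E n Ab C L y tau zh"
    and j: "j \<in> {1..N}" and w: "w \<in> {1..N}" "w \<noteq> j"
    and tw: "tau j w k = Some s"
  shows "\<exists>k' w' s'. k = Suc k' \<and> s = Suc s' \<and> w' \<in> {1..N} \<and> tau j w' k' = Some s'
     \<and> zh w j k = adopt_upd n Ab zh j w w' k'"
proof (cases k)
  case 0
  have "\<forall>j\<in>{1..N}. \<forall>i\<in>{1..N}. tau j i 0 = (if i = j then Some 0 else None)"
    using run unfolding fresh_run_def by (elim conjE) assumption
  then have "tau j w 0 = None" using j w by auto
  then show ?thesis using tw 0 by simp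
next
  case (Suc k')
  have "\<forall>j\<in>{1..N}. \<forall>i\<in>{1..N}. i \<noteq> j \<longrightarrow> (\<forall>k. fresh_step E n Ab tau zh j i k)"
    using run unfolding fresh_run_def by (elim conjE) assumption
  then have fs: "fresh_step E n Ab tau zh j w k'" using j w by blast
  have nb: "\<And>u. u \<in> nbrs E w k' \<Longrightarrow> u \<in> {1..N}"
  proof -
    fix u assume "u \<in> nbrs E w k'"
    then have "(u, w) \<in> E k'" by (simp add: nbrs_def)
    then show "u \<in> {1..N}" using graph by blast
  qed
  show ?thesis
  proof (cases "tau j w k'")
    case None
    let ?M = "{l \<in> nbrs E w k'. tau j l k' \<noteq> None}"
    show ?thesis
    proof (cases "?M = {}")
      case True
      then show ?thesis using fs None tw Suc unfolding fresh_step_def Let_def by simp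
    next
      case False
      then obtain u where u: "u \<in> ?M" "tau j w (Suc k') = Some (the (tau j u k') + 1)"
        "zh w j (Suc k') = adopt_upd n Ab zh j w u k'"
        using fs None unfolding fresh_step_def Let_def by auto
      then obtain sv where sv: "tau j u k' = Some sv" by auto
      show ?thesis using u sv Suc tw nb[of u] by (intro exI[of _ k'] exI[of _ u] exI[of _ sv]) auto
    qed
  next
    case (Some t)
    let ?F = "{l \<in> {l \<in> nbrs E w k'. tau j l k' \<noteq> None}. the (tau j l k') < t}"
    show ?thesis
    proof (cases "?F = {}")
      case True
      then have "tau j w (Suc k') = Some (t + 1) \<and> zh w j (Suc k') = openloop_upd n Ab zh j w k'"
        using fs Some unfolding fresh_step_def Let_def by simp
      then show ?thesis using Suc tw Some w
        by (intro exI[of _ k'] exI[of _ w] exI[of _ t]) (auto simp: openloop_upd_def adopt_upd_def)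
    next
      case False
      then obtain u where u: "u \<in> ?F" "tau j w (Suc k') = Some (the (tau j u k') + 1)"
        "zh w j (Suc k') = adopt_upd n Ab zh j w u k'"
        using fs Some unfolding fresh_step_def Let_def by auto
      then obtain sv where sv: "tau j u k' = Some sv" by auto
      show ?thesis using u sv Suc tw nb[of u] by (intro exI[of _ k'] exI[of _ u] exI[of _ sv]) auto
    qed
  qed
qed


lemma gen:
  assumes graph: "\<forall>k. E k \<subseteq> {1..N} \<times> {1..N}"
    and plant: "plant N n p Ab C z y"
    and gains: "\<forall>j\<in>{1..N}. L j \<in> carrier_mat (n j) (p j)"
    and run: "fresh_run N E n Ab C L y tau zh"
    and j: "j \<in> {1..N}"
  shows "w \<in> {1..N} \<Longrightarrow> tau j w k = Some m \<Longrightarrow> \<exists>v. (\<forall>t\<in>{k - m..<k}. v t \<in> {1..N} - {j}) \<and>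
    zh w j k = (Ab j j ^\<^sub>m m) *\<^sub>v zh j j (k - m)
      + vsum (n j) (\<lambda>q. vsum (n j)
          (\<lambda>t. (Ab j j ^\<^sub>m (k - t - 1) * Ab j q) *\<^sub>v zh (v t) q t) {k - m..<k}) {1..<j}"
proof (induction m arbitrary: w k)
  have pd: "\<forall>j\<in>{1..N}. \<forall>q\<in>{1..N}. Ab j q \<in> carrier_mat (n j) (n q) \<and> C j q \<in> carrier_mat (p j) (n q)"
    using plant unfolding plant_def by (elim conjE) assumption
  have Ajj: "Ab j j \<in> carrier_mat (n j) (n j)" using pd j by blast
  have zhd: "\<And>a b t. a \<in> {1..N} \<Longrightarrow> b \<in> {1..N} \<Longrightarrow> zh a b t \<in> carrier_vec (n b)"
    using zh_dims[OF run gains] by blast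
  case 0
  have wj: "w = j"
  proof (rule ccontr)
    assume "w \<noteq> j"
    from pred_step[OF graph run j 0(1) this 0(2)] show False by auto
  qed
  have "zh w j k = (Ab j j ^\<^sub>m 0) *\<^sub>v zh j j (k - 0) + vsum (n j) (\<lambda>q. vsum (n j)
          (\<lambda>t. (Ab j j ^\<^sub>m (k - t - 1) * Ab j q) *\<^sub>v zh w q t) {k - 0..<k}) {1..<j}"
    using Ajj zhd[OF j j, of k] wj by (simp add: vsum_empty vsum_zero)
  then have "(\<forall>t\<in>{k - 0..<k}. (\<lambda>_. w) t \<in> {1..N} - {j}) \<and> zh w j k = (Ab j j ^\<^sub>m 0) *\<^sub>v zh j j (k - 0) + vsum (n j) (\<lambda>q. vsum (n j)
          (\<lambda>t. (Ab j j ^\<^sub>m (k - t - 1) * Ab j q) *\<^sub>v zh ((\<lambda>_. w) t) q t) {k - 0..<k}) {1..<j}"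
    by simp
  then show ?case by (rule exI[of _ "\<lambda>_. w"])
next
  case (Suc m)
  have pd: "\<forall>j\<in>{1..N}. \<forall>q\<in>{1..N}. Ab j q \<in> carrier_mat (n j) (n q) \<and> C j q \<in> carrier_mat (p j) (n q)"
    using plant unfolding plant_def by (elim conjE) assumption
  have Ajj: "Ab j j \<in> carrier_mat (n j) (n j)" using pd j by blast
  have Ajq: "\<And>q. q \<in> {1..<j} \<Longrightarrow> Ab j q \<in> carrier_mat (n j) (n q)"
  proof -
    fix q assume "q \<in> {1..<j}"
    then have "q \<in> {1..N}" using j by auto
    then show "Ab j q \<in> carrier_mat (n j) (n q)" using pd j by blast
  qed
  have zhd: "\<And>a b t. a \<in> {1..N} \<Longrightarrow> b \<in> {1..N} \<Longrightarrow> zh a b t \<in> carrier_vec (n b)"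
    using zh_dims[OF run gains] by blast
  have qN: "\<And>q. q \<in> {1..<j} \<Longrightarrow> q \<in> {1..N}" using j by auto
  have tjj: "\<forall>j\<in>{1..N}. \<forall>k. tau j j k = Some 0"
    using run unfolding fresh_run_def by (elim conjE) assumption
  have wj: "w \<noteq> j" using tjj j Suc.prems(2) by auto
  from pred_step[OF graph run j Suc.prems(1) wj Suc.prems(2)] obtain k' w' where
    k: "k = Suc k'" and w': "w' \<in> {1..N}" "tau j w' k' = Some m"
    and upd: "zh w j k = adopt_upd n Ab zh j w w' k'" by auto
  from Suc.IH[OF w'] obtain v where v: "\<forall>t\<in>{k' - m..<k'}. v t \<in> {1..N} - {j}"
    and IH: "zh w' j k' = (Ab j j ^\<^sub>m m) *\<^sub>v zh j j (k' - m)
      + vsum (n j) (\<lambda>q. vsum (n j)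
          (\<lambda>t. (Ab j j ^\<^sub>m (k' - t - 1) * Ab j q) *\<^sub>v zh (v t) q t) {k' - m..<k'}) {1..<j}" by blast
  define v' where "v' = v(k' := w)"
  define A where "A = Ab j j"
  define I where "I = {k' - m..<k'}"
  define x where "x = zh j j (k' - m)"
  define S where "S = vsum (n j) (\<lambda>q. vsum (n j)
          (\<lambda>t. (A ^\<^sub>m (k' - t - 1) * Ab j q) *\<^sub>v zh (v t) q t) I) {1..<j}"
  define S' where "S' = vsum (n j) (\<lambda>q. vsum (n j)
          (\<lambda>t. (A ^\<^sub>m (k - t - 1) * Ab j q) *\<^sub>v zh (v t) q t) I) {1..<j}"
  define T where "T = vsum (n j) (\<lambda>q. Ab j q *\<^sub>v zh w q k') {1..<j}"
  have A: "A \<in> carrier_mat (n j) (n j)" using Ajj A_def by simp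
  have x: "x \<in> carrier_vec (n j)" using zhd[OF j j] x_def by simp
  have vI: "\<And>t. t \<in> I \<Longrightarrow> v t \<in> {1..N}" using v I_def by auto
  have e1: "zh w j k = A *\<^sub>v (A ^\<^sub>m m *\<^sub>v x + S) + T"
    using upd IH unfolding adopt_upd_def A_def x_def S_def T_def I_def by simp
  have e2: "A *\<^sub>v (A ^\<^sub>m m *\<^sub>v x + S) = A ^\<^sub>m Suc m *\<^sub>v x + A *\<^sub>v S"
  proof -
    have "A *\<^sub>v (A ^\<^sub>m m *\<^sub>v x + S) = A *\<^sub>v (A ^\<^sub>m m *\<^sub>v x) + A *\<^sub>v S"
    proof (rule mult_add_distrib_mat_vec[OF A])
      have "dim_vec (A ^\<^sub>m m *\<^sub>v x) = n j" using A by simp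
      then show "A ^\<^sub>m m *\<^sub>v x \<in> carrier_vec (n j)" by (rule carrier_vecI)
      show "S \<in> carrier_vec (n j)" unfolding S_def by (rule vsum_carrier)
    qed
    also have "A *\<^sub>v (A ^\<^sub>m m *\<^sub>v x) = (A * A ^\<^sub>m m) *\<^sub>v x"
      using A x by (simp add: assoc_mult_mat_vec[of _ "n j" "n j" _ "n j"])
    finally show ?thesis using pow_left[OF A] by simp
  qed
  have e3: "A *\<^sub>v S = S'"
  proof -
    have "A *\<^sub>v S = vsum (n j) (\<lambda>q. A *\<^sub>v vsum (n j)
          (\<lambda>t. (A ^\<^sub>m (k' - t - 1) * Ab j q) *\<^sub>v zh (v t) q t) I) {1..<j}"
      unfolding S_def using A by (subst mult_vsum) auto
    also have "\<dots> = S'" unfolding S'_def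
    proof (rule vsum_cong)
      fix q assume q: "q \<in> {1..<j}"
      have "A *\<^sub>v vsum (n j) (\<lambda>t. (A ^\<^sub>m (k' - t - 1) * Ab j q) *\<^sub>v zh (v t) q t) I
         = vsum (n j) (\<lambda>t. A *\<^sub>v ((A ^\<^sub>m (k' - t - 1) * Ab j q) *\<^sub>v zh (v t) q t)) I"
        using A by (subst mult_vsum) auto
      also have "\<dots> = vsum (n j) (\<lambda>t. (A ^\<^sub>m (k - t - 1) * Ab j q) *\<^sub>v zh (v t) q t) I"
      proof (rule vsum_cong)
        fix t assume t: "t \<in> I"
        have zq: "zh (v t) q t \<in> carrier_vec (n q)" using zhd[OF vI[OF t] qN[OF q]] .
        have Aq: "Ab j q \<in> carrier_mat (n j) (n q)" using Ajq[OF q] .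
        have kt: "k - t - 1 = Suc (k' - t - 1)" using t k I_def by auto
        have "A *\<^sub>v ((A ^\<^sub>m (k' - t - 1) * Ab j q) *\<^sub>v zh (v t) q t)
           = (A * (A ^\<^sub>m (k' - t - 1) * Ab j q)) *\<^sub>v zh (v t) q t"
          using A Aq zq by (subst assoc_mult_mat_vec[of _ "n j" "n j" _ "n q"]) auto
        also have "A * (A ^\<^sub>m (k' - t - 1) * Ab j q) = (A * A ^\<^sub>m (k' - t - 1)) * Ab j q"
          using A Aq by (subst assoc_mult_mat[of _ "n j" "n j" _ "n j" _ "n q"]) auto
        also have "\<dots> = A ^\<^sub>m (k - t - 1) * Ab j q" using pow_left[OF A] kt by simp
        finally show "A *\<^sub>v ((A ^\<^sub>m (k' - t - 1) * Ab j q) *\<^sub>v zh (v t) q t)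
           = (A ^\<^sub>m (k - t - 1) * Ab j q) *\<^sub>v zh (v t) q t" .
      qed
      finally show "A *\<^sub>v vsum (n j) (\<lambda>t. (A ^\<^sub>m (k' - t - 1) * Ab j q) *\<^sub>v zh (v t) q t) I
         = vsum (n j) (\<lambda>t. (A ^\<^sub>m (k - t - 1) * Ab j q) *\<^sub>v zh (v t) q t) I" .
    qed
    finally show ?thesis .
  qed
  have e4: "S' + T = vsum (n j) (\<lambda>q. vsum (n j)
          (\<lambda>t. (A ^\<^sub>m (k - t - 1) * Ab j q) *\<^sub>v zh (v' t) q t) {k - Suc m..<k}) {1..<j}"
  proof -
    have "S' + T = vsum (n j) (\<lambda>q. vsum (n j)
          (\<lambda>t. (A ^\<^sub>m (k - t - 1) * Ab j q) *\<^sub>v zh (v t) q t) I + Ab j q *\<^sub>v zh w q k') {1..<j}"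
      unfolding S'_def T_def using Ajq by (subst vsum_add) auto
    also have "\<dots> = vsum (n j) (\<lambda>q. vsum (n j)
          (\<lambda>t. (A ^\<^sub>m (k - t - 1) * Ab j q) *\<^sub>v zh (v' t) q t) {k - Suc m..<k}) {1..<j}"
    proof (rule vsum_cong)
      fix q assume q: "q \<in> {1..<j}"
      have Aq: "Ab j q \<in> carrier_mat (n j) (n q)" using Ajq[OF q] .
      have Ieq: "{k - Suc m..<k} = insert k' I" using k I_def by auto
      have "vsum (n j) (\<lambda>t. (A ^\<^sub>m (k - t - 1) * Ab j q) *\<^sub>v zh (v' t) q t) (insert k' I)
         = vsum (n j) (\<lambda>t. (A ^\<^sub>m (k - t - 1) * Ab j q) *\<^sub>v zh (v' t) q t) I
           + (A ^\<^sub>m (k - k' - 1) * Ab j q) *\<^sub>v zh (v' k') q k'"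
        using A by (subst vsum_insert) (auto simp: I_def)
      also have "vsum (n j) (\<lambda>t. (A ^\<^sub>m (k - t - 1) * Ab j q) *\<^sub>v zh (v' t) q t) I
          = vsum (n j) (\<lambda>t. (A ^\<^sub>m (k - t - 1) * Ab j q) *\<^sub>v zh (v t) q t) I"
        by (rule vsum_cong) (auto simp: v'_def I_def)
      also have "(A ^\<^sub>m (k - k' - 1) * Ab j q) *\<^sub>v zh (v' k') q k' = Ab j q *\<^sub>v zh w q k'"
        using A Aq k by (simp add: v'_def)
      finally show "vsum (n j) (\<lambda>t. (A ^\<^sub>m (k - t - 1) * Ab j q) *\<^sub>v zh (v t) q t) I + Ab j q *\<^sub>v zh w q k'
         = vsum (n j) (\<lambda>t. (A ^\<^sub>m (k - t - 1) * Ab j q) *\<^sub>v zh (v' t) q t) {k - Suc m..<k}"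
        using Ieq by simp
    qed
    finally show ?thesis .
  qed
  have c1: "A ^\<^sub>m Suc m *\<^sub>v x \<in> carrier_vec (n j)"
  proof (rule carrier_vecI)
    show "dim_vec (A ^\<^sub>m Suc m *\<^sub>v x) = n j" using A by simp
  qed
  have c2: "S' \<in> carrier_vec (n j)" "T \<in> carrier_vec (n j)" unfolding S'_def T_def by (rule vsum_carrier)+
  have "zh w j k = (A ^\<^sub>m Suc m *\<^sub>v x + S') + T" by (simp only: e1 e2 e3)
  also have "\<dots> = A ^\<^sub>m Suc m *\<^sub>v x + (S' + T)" by (rule assoc_add_vec[OF c1 c2])
  also have "x = zh j j (k - Suc m)" using x_def k by simp
  finally have fin: "zh w j k = A ^\<^sub>m Suc m *\<^sub>v zh j j (k - Suc m) + vsum (n j) (\<lambda>q. vsum (n j)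
          (\<lambda>t. (A ^\<^sub>m (k - t - 1) * Ab j q) *\<^sub>v zh (v' t) q t) {k - Suc m..<k}) {1..<j}"
    using e4 by simp
  have "\<forall>t\<in>{k - Suc m..<k}. v' t \<in> {1..N} - {j}"
    using v k Suc.prems(1) wj by (auto simp: v'_def)
  then show ?case using fin unfolding A_def by blast
qed

theorem lemma4:
  fixes N :: nat and E :: "nat \<Rightarrow> (nat \<times> nat) set"
    and n p :: "nat \<Rightarrow> nat"
    and Ab C :: "nat \<Rightarrow> nat \<Rightarrow> real mat" and L :: "nat \<Rightarrow> real mat"
    and z y :: "nat \<Rightarrow> nat \<Rightarrow> real vec"
    and tau :: "nat \<Rightarrow> nat \<Rightarrow> nat \<Rightarrow> nat option"
    and zh :: "nat \<Rightarrow> nat \<Rightarrow> nat \<Rightarrow> real vec"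
    and j i k m :: nat
  assumes graph: "\<forall>k. E k \<subseteq> {1..N} \<times> {1..N}"
    and plant: "plant N n p Ab C z y"
    and gains: "\<forall>j\<in>{1..N}. L j \<in> carrier_mat (n j) (p j)"
    and run: "fresh_run N E n Ab C L y tau zh"
    and j: "j \<in> {1..N}" and i: "i \<in> {1..N}" "i \<noteq> j"
    and m: "m \<ge> 1"
    and tau_im: "tau j i k = Some m"
  shows "\<exists>v. (\<forall>t\<in>{k - m..<k}. v t \<in> {1..N} - {j}) \<and>
    zh i j k = (Ab j j ^\<^sub>m m) *\<^sub>v zh j j (k - m)
      + vsum (n j) (\<lambda>q. vsum (n j)
          (\<lambda>t. (Ab j j ^\<^sub>m (k - t - 1) * Ab j q) *\<^sub>v zh (v t) q t) {k - m..<k}) {1..<j}"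
  using gen[OF graph plant gains run j i(1) tau_im] by blast

end
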